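(* Let $T:M_d\to M_d$ be completely positive with $T(I)\le I$ and finite stabilization index, and let $Q$ be its orbit-support projection. Then \[ \mathrm{rank}(Q)\le\mathrm{rank}(d(T))+\mathrm{rank}(T(I))-\dim\big(\mathrm{Ran}(d(T))\cap\mathrm{Ran}(T(I))\big), \] and in particular $\mathrm{rank}(Q)\le\min\{d,\ \mathrm{rank}(d(T))+\mathrm{rank}(T(I))\}$.
   Context: $d(T)=I-T(I)$; $n_T=\min\{n\ge1: T^n(d(T))=0\}$. For positive semidefinite $x$, $\mathrm{supp}(x)$ is the orthogonal projection onto $\mathrm{Ran}(x)$. The orbit-support projection is $Q=\bigvee_{k<n_T}\mathrm{supp}(T^k(d(T)))$. *)

theory Defs
  imports "HOL-Analysis.Analysis" "HOL-Library.Complex_Order"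
begin

text \<open>Matrices in M_d are represented as complex^'d^'d (d = CARD('d)).\<close>

definition cinner :: "complex^'d \<Rightarrow> complex^'d \<Rightarrow> complex" where
  "cinner x y = (\<Sum>i\<in>UNIV. cnj (x$i) * y$i)"

definition cadj :: "complex^'d^'d \<Rightarrow> complex^'d^'d" where
  "cadj A = (\<chi> i j. cnj (A$j$i))"

definition cscale :: "complex \<Rightarrow> complex^'d^'d \<Rightarrow> complex^'d^'d" where
  "cscale c A = (\<chi> i j. c * A$i$j)"

definition psd :: "complex^'d^'d \<Rightarrow> bool" where
  "psd A \<longleftrightarrow> (\<forall>x. 0 \<le> cinner x (A *v x))"

definition loewner_le :: "complex^'d^'d \<Rightarrow> complex^'d^'d \<Rightarrow> bool" where
  "loewner_le A B \<longleftrightarrow> psd (B - A)"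

text \<open>A k x k block matrix [X i j] (i,j<k) with blocks in M_d, viewed as an element of
  M_k(M_d) = M_{kd}, is positive semidefinite.\<close>
definition block_psd :: "nat \<Rightarrow> (nat \<Rightarrow> nat \<Rightarrow> complex^'d^'d) \<Rightarrow> bool" where
  "block_psd k X \<longleftrightarrow>
     (\<forall>v :: nat \<Rightarrow> complex^'d. 0 \<le> (\<Sum>i<k. \<Sum>j<k. cinner (v i) (X i j *v v j)))"

definition clinear_map :: "(complex^'d^'d \<Rightarrow> complex^'e^'e) \<Rightarrow> bool" where
  "clinear_map T \<longleftrightarrow> (\<forall>A B. T (A + B) = T A + T B) \<and> (\<forall>c A. T (cscale c A) = cscale c (T A))"

text \<open>Complete positivity: T is linear and id_k \<otimes> T is positive for every k.\<close>
definition completely_positive :: "(complex^'d^'d \<Rightarrow> complex^'e^'e) \<Rightarrow> bool" where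
  "completely_positive T \<longleftrightarrow> clinear_map T \<and>
     (\<forall>k X. block_psd k X \<longrightarrow> block_psd k (\<lambda>i j. T (X i j)))"

definition Ran :: "complex^'d^'d \<Rightarrow> (complex^'d) set" where
  "Ran A = range (\<lambda>v. A *v v)"

definition orth_proj :: "(complex^'d) set \<Rightarrow> complex^'d^'d" where
  "orth_proj S = (THE P. P ** P = P \<and> cadj P = P \<and> Ran P = S)"

definition supp :: "complex^'d^'d \<Rightarrow> complex^'d^'d" where
  "supp x = orth_proj (Ran x)"

definition proj_Sup :: "(complex^'d^'d) set \<Rightarrow> complex^'d^'d" where
  "proj_Sup Ps = orth_proj (vec.span (\<Union>P\<in>Ps. Ran P))"

definition defect :: "(complex^'d^'d \<Rightarrow> complex^'d^'d) \<Rightarrow> complex^'d^'d" where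
  "defect T = mat 1 - T (mat 1)"

definition stab_index :: "(complex^'d^'d \<Rightarrow> complex^'d^'d) \<Rightarrow> nat" where
  "stab_index T = (LEAST n. n \<ge> 1 \<and> (T ^^ n) (defect T) = 0)"

definition finite_stab_index :: "(complex^'d^'d \<Rightarrow> complex^'d^'d) \<Rightarrow> bool" where
  "finite_stab_index T \<longleftrightarrow> (\<exists>n\<ge>1. (T ^^ n) (defect T) = 0)"

definition orbit_support :: "(complex^'d^'d \<Rightarrow> complex^'d^'d) \<Rightarrow> complex^'d^'d" where
  "orbit_support T = proj_Sup {supp ((T ^^ k) (defect T)) | k. k < stab_index T}"

end

theory Submission
  imports Defs
begin


lemma rows_le_cols:
  fixes A :: "'a::field^'n^'m"
  shows "vec.dim (rows A) \<le> vec.dim (columns A)"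
proof -
  obtain B where B: "B \<subseteq> vec.span (columns A)" "vec.independent B"
    "vec.span (columns A) \<subseteq> vec.span B" "card B = vec.dim (vec.span (columns A))"
    using vec.basis_exists by blast
  have fin: "finite B" using vec.finiteI_independent B(2) by blast
  have "\<forall>j. \<exists>u. column j A = (\<Sum>b\<in>B. u b *s b)"
  proof
    fix j
    have "column j A \<in> vec.span B" using B(3) vec.span_base[of "column j A" "columns A"]
      by (auto simp: columns_def)
    then show "\<exists>u. column j A = (\<Sum>b\<in>B. u b *s b)" using vec.span_finite[OF fin] by auto
  qed
  then obtain u where u: "\<And>j. column j A = (\<Sum>b\<in>B. u j b *s b)" by metis
  define \<rho> where "\<rho> b = (\<chi> j. u j b)" for b
  have "rows A \<subseteq> vec.span (\<rho> ` B)"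
  proof
    fix r assume "r \<in> rows A"
    then obtain i where r: "r = row i A" by (auto simp: rows_def)
    have "row i A = (\<Sum>b\<in>B. (b$i) *s \<rho> b)"
    proof (subst vec_eq_iff, rule allI)
      fix j
      have "(row i A)$j = (column j A)$i" by (simp add: row_def column_def)
      also have "\<dots> = (\<Sum>b\<in>B. u j b * b$i)" by (subst u) (simp add: sum_component)
      also have "\<dots> = (\<Sum>b\<in>B. (b$i) *s \<rho> b)$j" by (simp add: sum_component \<rho>_def mult.commute)
      finally show "(row i A)$j = (\<Sum>b\<in>B. (b$i) *s \<rho> b)$j" .
    qed
    moreover have "(\<Sum>b\<in>B. (b$i) *s \<rho> b) \<in> vec.span (\<rho> ` B)"
      by (rule vec.span_sum, rule vec.span_scale, rule vec.span_base) auto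
    ultimately show "r \<in> vec.span (\<rho> ` B)" using r by simp
  qed
  then have "vec.dim (rows A) \<le> card (\<rho> ` B)" using fin by (intro vec.dim_le_card) auto
  also have "\<dots> \<le> card B" using fin card_image_le by blast
  finally show ?thesis using B(4) by simp
qed

lemma rank_eq_dim_Ran:
  fixes A :: "'a::field^'n^'m"
  shows "rank A = vec.dim (range (\<lambda>x. A *v x))"
proof -
  have "rank A = vec.dim (columns A)"
    using rows_le_cols[of A] rows_le_cols[of "transpose A"]
    by (simp add: row_rank_def_gen rows_transpose columns_transpose)
  moreover have "vec.dim (columns A) \<le> vec.dim (range (\<lambda>x. A *v x))"
  proof (rule vec.dim_subset, rule)
    fix c assume "c \<in> columns A"
    then obtain j where "c = column j A" by (auto simp: columns_def)
    then have "c = A *v axis j 1"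
      by (simp add: vec_eq_iff column_def matrix_vector_mult_def axis_def if_distrib if_distribR cong: if_cong)
    then show "c \<in> range (\<lambda>x. A *v x)" by blast
  qed
  moreover have "vec.dim (range (\<lambda>x. A *v x)) \<le> vec.dim (columns A)"
  proof -
    have "vec.dim (range (\<lambda>x. A *v x)) \<le> vec.dim (vec.span (columns A))"
      by (rule vec.dim_subset) (auto intro: matrix_vector_mult_in_columnspace_gen)
    then show ?thesis by simp
  qed
  ultimately show ?thesis by linarith
qed



lemma cinner_add_right: "cinner x (y + z) = cinner x y + cinner x z"
  by (simp add: cinner_def distrib_left sum.distrib)
lemma cinner_add_left: "cinner (x + y) z = cinner x z + cinner y z"
  by (simp add: cinner_def distrib_right sum.distrib)
lemma cinner_diff_right: "cinner x (y - z) = cinner x y - cinner x z"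
  by (simp add: cinner_def right_diff_distrib sum_subtractf)
lemma cinner_diff_left: "cinner (x - y) z = cinner x z - cinner y z"
  by (simp add: cinner_def left_diff_distrib sum_subtractf)
lemma cinner_scale_right: "cinner x (c *s y) = c * cinner x y"
  by (simp add: cinner_def sum_distrib_left algebra_simps)
lemma cinner_scale_left: "cinner (c *s x) y = cnj c * cinner x y"
  by (simp add: cinner_def sum_distrib_left algebra_simps)
lemma cinner_zero_left[simp]: "cinner 0 y = 0" by (simp add: cinner_def)
lemma cinner_zero_right[simp]: "cinner x 0 = 0" by (simp add: cinner_def)
lemma cinner_cnj: "cnj (cinner x y) = cinner y x"
  by (simp add: cinner_def mult.commute)
lemma cinner_sum_left: "finite I \<Longrightarrow> cinner (\<Sum>j\<in>I. f j) y = (\<Sum>j\<in>I. cinner (f j) y)"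
  by (induct I rule: finite_induct) (auto simp: cinner_add_left)
lemma cnj_mult_self: "cnj z * z = complex_of_real ((cmod z)^2)"
  unfolding cmod_power2 by (simp add: complex_eq_iff power2_eq_square)
lemma cinner_self: "cinner x x = of_real (\<Sum>i\<in>UNIV. (cmod (x$i))^2)"
  by (simp add: cinner_def cnj_mult_self)
lemma cinner_minus_right: "cinner x (- y) = - cinner x y"
  by (simp add: cinner_def sum_negf)
lemma cinner_self_eq_0: "cinner x x = 0 \<longleftrightarrow> x = 0"
proof
  assume "cinner x x = 0"
  then have "(\<Sum>i\<in>UNIV. (cmod (x$i))^2) = 0" by (simp only: cinner_self of_real_eq_0_iff)
  then have "\<forall>i\<in>UNIV. (cmod (x$i))^2 = 0" by (subst (asm) sum_nonneg_eq_0_iff) auto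
  then show "x = 0" by (simp add: vec_eq_iff)
qed simp
lemma cinner_axis: "cinner (axis i 1) v = v$i"
  by (simp add: cinner_def axis_def if_distrib if_distribR cong: if_cong)

lemma inner_Re_cinner: "inner x y = Re (cinner (x::complex^'d) y)"
  by (simp add: inner_vec_def cinner_def Re_sum inner_complex_def)

lemma scaleR_vec_cscale: "(r::real) *\<^sub>R (x::complex^'d) = complex_of_real r *s x"
  unfolding vec_eq_iff vector_scaleR_component vector_smult_component by (simp add: scaleR_conv_of_real)

lemma csubspace_real:
  assumes "vec.subspace (S::(complex^'d) set)" shows "subspace S"
  using assms unfolding vec.subspace_def subspace_def by (simp add: scaleR_vec_cscale)

lemma cdecomp:
  assumes S: "vec.subspace (S::(complex^'d) set)"
  obtains p z where "p \<in> S" "\<And>s. s \<in> S \<Longrightarrow> cinner z s = 0" "x = p + z"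
proof -
  have rS: "subspace S" using csubspace_real[OF S] .
  obtain y z where y: "y \<in> span S" and o: "\<And>w. w \<in> span S \<Longrightarrow> orthogonal z w" and x: "x = y + z"
    using orthogonal_subspace_decomp_exists[of S x] by metis
  have sp: "span S = S" using rS by (simp add: span_eq_iff)
  have "cinner z s = 0" if s: "s \<in> S" for s
  proof -
    have "Re (cinner z s) = 0" using o[of s] s sp by (simp add: orthogonal_def inner_Re_cinner)
    moreover have "(-\<i>) *s s \<in> S" by (rule vec.subspace_scale[OF S s])
    then have "Re (cinner z ((-\<i>) *s s)) = 0" using o[of "(-\<i>) *s s"] sp
      by (simp add: orthogonal_def inner_Re_cinner)
    then have "Im (cinner z s) = 0" by (simp add: cinner_scale_right cinner_minus_right)
    ultimately show ?thesis by (simp add: complex_eq_iff)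
  qed
  then show ?thesis using that[of y z] y x sp by auto
qed

lemma cdecomp_unique:
  assumes S: "vec.subspace (S::(complex^'d) set)"
    and p: "p \<in> S" "\<And>s. s \<in> S \<Longrightarrow> cinner (x - p) s = 0"
    and q: "q \<in> S" "\<And>s. s \<in> S \<Longrightarrow> cinner (x - q) s = 0"
  shows "p = q"
proof -
  have pq: "p - q \<in> S" using S p q by (simp add: vec.subspace_diff)
  have "cinner (p - q) (p - q) = cinner ((x - q) - (x - p)) (p - q)" by (simp add: algebra_simps)
  also have "\<dots> = 0" using p(2)[OF pq] q(2)[OF pq] by (simp add: cinner_diff_left)
  finally show ?thesis by (simp add: cinner_self_eq_0)
qed

lemma cadj_mult: "cadj (A ** B) = cadj B ** (cadj A :: complex^'d^'d)"
  by (simp add: cadj_def matrix_matrix_mult_def vec_eq_iff mult.commute)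

lemma proj_exists:
  assumes S: "vec.subspace (S::(complex^'d) set)"
  shows "\<exists>P. P ** P = P \<and> cadj P = P \<and> Ran P = S"
proof -
  define f where "f x = (SOME p. p \<in> S \<and> (\<forall>s\<in>S. cinner (x - p) s = 0))" for x
  have fx: "f x \<in> S \<and> (\<forall>s\<in>S. cinner (x - f x) s = 0)" for x
  proof -
    obtain p z where "p \<in> S" "\<And>s. s \<in> S \<Longrightarrow> cinner z s = 0" "x = p + z"
      using cdecomp[OF S] by metis
    then have "\<exists>p. p \<in> S \<and> (\<forall>s\<in>S. cinner (x - p) s = 0)" by (intro exI[of _ p]) auto
    then show ?thesis unfolding f_def by (rule someI_ex)
  qed
  have funiq: "f x = p" if "p \<in> S" "\<And>s. s \<in> S \<Longrightarrow> cinner (x - p) s = 0" for x p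
    using cdecomp_unique[OF S, of "f x" x p] fx that by auto
  have ffix: "f s = s" if "s \<in> S" for s using funiq[of s s] that by simp
  define P where "P = (\<chi> i j. (f (axis j 1))$i)"
  have colP: "column j P = f (axis j 1)" for j by (simp add: P_def column_def vec_eq_iff)
  have Pf: "P *v x = f x" for x
  proof -
    have Px: "P *v x = (\<Sum>j\<in>UNIV. x$j *s f (axis j 1))" by (simp add: matrix_mult_sum colP)
    have xe: "x = (\<Sum>j\<in>UNIV. x$j *s axis j 1)"
      by (simp add: vec_eq_iff sum_component axis_def if_distrib if_distribR cong: if_cong)
    have "P *v x \<in> S" unfolding Px
      by (intro vec.subspace_sum[OF S] vec.subspace_scale[OF S]) (use fx in auto)
    moreover have "cinner (x - P *v x) s = 0" if s: "s \<in> S" for s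
    proof -
      have "x - P *v x = (\<Sum>j\<in>UNIV. x$j *s (axis j 1 - f (axis j 1)))"
        by (subst (1) xe) (simp add: Px sum_subtractf[symmetric] algebra_simps vector_ssub_ldistrib)
      then have "cinner (x - P *v x) s = (\<Sum>j\<in>UNIV. cnj (x$j) * cinner (axis j 1 - f (axis j 1)) s)"
        by (simp add: cinner_sum_left cinner_scale_left cinner_diff_left right_diff_distrib)
      also have "\<dots> = 0" using fx s by simp
      finally show ?thesis .
    qed
    ultimately show ?thesis using funiq by metis
  qed
  have sym: "cinner x (f y) = cinner (f x) y" for x y
  proof -
    have a: "cinner (x - f x) (f y) = 0" using fx by blast
    have "cinner (y - f y) (f x) = 0" using fx by blast
    then have b: "cinner (f x) (y - f y) = 0" by (metis cinner_cnj complex_cnj_zero)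
    have "cinner x (f y) = cinner (f x) (f y)" using a by (simp add: cinner_diff_left)
    moreover have "cinner (f x) y = cinner (f x) (f y)" using b by (simp add: cinner_diff_right)
    ultimately show ?thesis by simp
  qed
  have PP: "(P ** P) *v x = P *v x" for x
  proof -
    have "(P ** P) *v x = f (f x)" by (simp only: matrix_vector_mul_assoc[symmetric] Pf)
    also have "\<dots> = f x" using ffix fx by blast
    finally show ?thesis by (simp only: Pf)
  qed
  have "P ** P = P" unfolding matrix_eq using PP by blast
  moreover have "cadj P = P"
  proof -
    have "cnj (P$j$i) = P$i$j" for i j
    proof -
      have "P$j$i = cinner (axis j 1) (f (axis i 1))" by (simp add: P_def cinner_axis)
      moreover have "P$i$j = cinner (axis i 1) (f (axis j 1))" by (simp add: P_def cinner_axis)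
      ultimately show ?thesis by (simp add: sym cinner_cnj)
    qed
    then show ?thesis by (simp add: cadj_def vec_eq_iff)
  qed
  moreover have "Ran P = S"
  proof
    show "Ran P \<subseteq> S" unfolding Ran_def Pf using fx by auto
    show "S \<subseteq> Ran P" unfolding Ran_def Pf
    proof
      fix s assume "s \<in> S" then have "s = f s" using ffix by simp
      then show "s \<in> range f" by blast
    qed
  qed
  ultimately show ?thesis by (intro exI[of _ P]) simp
qed

lemma orth_proj_Ran:
  assumes S: "vec.subspace (S::(complex^'d) set)"
  shows "Ran (orth_proj S) = S"
proof -
  obtain P where P: "P ** P = P" "cadj P = P" "Ran P = S" using proj_exists[OF S] by blast
  have uniq: "P' = P" if P': "P' ** P' = P'" "cadj P' = P'" "Ran P' = S" for P'
  proof -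
    have absorb: "A ** B = B" if A: "A ** A = A" "Ran A = S" and B: "Ran B = S" for A B :: "complex^'d^'d"
    proof (subst matrix_eq, rule allI)
      fix v
      have "B *v v \<in> Ran A" using A B by (auto simp: Ran_def)
      then obtain u where u: "B *v v = A *v u" by (auto simp: Ran_def)
      have "(A ** B) *v v = A *v (B *v v)" by (simp only: matrix_vector_mul_assoc)
      also have "\<dots> = A *v (A *v u)" by (simp only: u)
      also have "\<dots> = (A ** A) *v u" by (simp only: matrix_vector_mul_assoc)
      finally show "(A ** B) *v v = B *v v" using A(1) u by simp
    qed
    have "P' ** P = P" using absorb P' P by blast
    moreover have "P ** P' = P'" using absorb P' P by blast
    ultimately have "cadj P = P'"
    proof -
      assume a: "P' ** P = P" "P ** P' = P'"
      have "cadj P = cadj (P' ** P)" by (simp only: a(1))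
      also have "\<dots> = cadj P ** cadj P'" by (rule cadj_mult)
      also have "\<dots> = P ** P'" by (simp only: P(2) P'(2))
      finally show ?thesis using a(2) by simp
    qed
    then show ?thesis using P(2) by simp
  qed
  have "orth_proj S = P" unfolding orth_proj_def
  proof (rule the_equality)
    show "P ** P = P \<and> cadj P = P \<and> Ran P = S" using P by simp
    fix P' assume "P' ** P' = P' \<and> cadj P' = P' \<and> Ran P' = S"
    then show "P' = P" using uniq by blast
  qed
  then show ?thesis using P by simp
qed



lemma mv_scale: "A *v (c *s x) = c *s (A *v (x::complex^'d))"
  by (simp add: vec_eq_iff matrix_vector_mult_def sum_distrib_left algebra_simps)

lemma Ran_subspace: "vec.subspace (Ran (A::complex^'d^'d))"
  unfolding vec.subspace_def Ran_def
proof (intro conjI ballI allI)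
  show "0 \<in> range ((*v) A)" by (metis matrix_vector_mult_0_right rangeI)
  fix x y assume "x \<in> range ((*v) A)" "y \<in> range ((*v) A)"
  then obtain u v where "x = A *v u" "y = A *v v" by blast
  then have "x + y = A *v (u + v)" by (simp add: matrix_vector_right_distrib)
  then show "x + y \<in> range ((*v) A)" by blast
next
  fix c x assume "x \<in> range ((*v) A)"
  then obtain u where "x = A *v u" by blast
  then have "c *s x = A *v (c *s u)" by (simp add: mv_scale)
  then show "c *s x \<in> range ((*v) A)" by blast
qed

lemma quad_zero:
  fixes p q :: real
  assumes "\<And>s. 0 \<le> s * p + s^2 * q" "0 \<le> q"
  shows "p = 0"
proof -
  define s0 where "s0 = - p / (q + 1)"
  have q1: "q + 1 \<noteq> 0" using assms(2) by simp
  have e: "s0 * (q+1) = -p" using q1 by (simp add: s0_def)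
  have "0 \<le> s0 * p + s0^2 * q" by (rule assms(1))
  then have "0 \<le> (q + 1)^2 * (s0 * p + s0^2 * q)" by simp
  also have "(q + 1)^2 * (s0 * p + s0^2 * q) = (q+1) * p * (s0*(q+1)) + (s0*(q+1))^2 * q" by algebra
  also have "\<dots> = (q+1)*p*(-p) + (-p)^2*q" by (simp only: e)
  also have "\<dots> = - (p^2)" by algebra
  finally show ?thesis by simp
qed

lemma psd_zero_form:
  assumes A: "psd A" and z: "cinner z (A *v z) = 0"
  shows "cinner z (A *v w) = 0"
proof -
  define a where "a = cinner z (A *v w)"
  define b where "b = cinner w (A *v z)"
  define c where "c = cinner w (A *v w)"
  have key: "0 \<le> t * a + cnj t * b + cnj t * t * c" for t
  proof -
    have "0 \<le> cinner (z + t *s w) (A *v (z + t *s w))" using A by (simp add: psd_def)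
    also have "\<dots> = t * a + cnj t * b + cnj t * t * c"
      by (simp add: a_def b_def c_def z matrix_vector_right_distrib mv_scale cinner_add_left
          cinner_add_right cinner_scale_left cinner_scale_right algebra_simps)
    finally show ?thesis .
  qed
  have c0: "0 \<le> c" using A by (simp add: psd_def c_def)
  then have cR: "Im c = 0" "0 \<le> Re c" by (auto simp: less_eq_complex_def)
  have r1: "0 \<le> s * Re (a + b) + s^2 * Re c" for s :: real
    using key[of "complex_of_real s"] cR by (auto simp: less_eq_complex_def power2_eq_square algebra_simps)
  have i1: "Im (a + b) = 0"
    using key[of "1"] cR by (auto simp: less_eq_complex_def power2_eq_square algebra_simps)
  have r2: "0 \<le> s * (- Im (a - b)) + s^2 * Re c" for s :: real
    using key[of "\<i> * complex_of_real s"] cR by (auto simp: less_eq_complex_def power2_eq_square algebra_simps)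
  have i2: "Re (a - b) = 0"
    using key[of "\<i>"] cR by (auto simp: less_eq_complex_def power2_eq_square algebra_simps)
  have "Re (a + b) = 0" using quad_zero[OF r1 cR(2)] .
  moreover have "Im (a - b) = 0" using quad_zero[OF r2 cR(2)] by simp
  ultimately have "a = 0" using i1 i2 by (simp add: complex_eq_iff)
  then show ?thesis by (simp add: a_def)
qed

lemma psd_le_Ran:
  assumes A: "psd A" and BA: "psd (B - A)"
  shows "Ran A \<subseteq> Ran (B::complex^'d^'d)"
proof
  fix y assume "y \<in> Ran A"
  then obtain x where y: "y = A *v x" by (auto simp: Ran_def)
  obtain p z where p: "p \<in> Ran B" and z: "\<And>s. s \<in> Ran B \<Longrightarrow> cinner z s = 0" and d: "A *v x = p + z"
    using cdecomp[OF Ran_subspace] by metis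
  have "cinner z (B *v z) = 0" using z by (simp add: Ran_def)
  moreover have "cinner z ((B - A) *v z) = cinner z (B *v z) - cinner z (A *v z)"
    by (simp only: matrix_vector_mult_diff_rdistrib cinner_diff_right)
  moreover have "0 \<le> cinner z ((B - A) *v z)" using BA unfolding psd_def by blast
  ultimately have "0 \<le> - cinner z (A *v z)" by simp
  moreover have "0 \<le> cinner z (A *v z)" using A by (simp add: psd_def)
  ultimately have "cinner z (A *v z) = 0" by (auto simp: less_eq_complex_def complex_eq_iff)
  then have "cinner z (A *v x) = 0" using psd_zero_form[OF A] by blast
  then have "cinner z z = 0" using z[OF p] d
    by (metis add_diff_cancel_left' cinner_diff_right diff_zero)
  then have "z = 0" by (simp add: cinner_self_eq_0)
  then show "y \<in> Ran B" using y d p by simp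
qed



lemma cp_add: "completely_positive T \<Longrightarrow> T (A + B) = T A + T B"
  by (simp add: completely_positive_def clinear_map_def)
lemma cp_scale: "completely_positive T \<Longrightarrow> T (cscale c A) = cscale c (T A)"
  by (simp add: completely_positive_def clinear_map_def)
lemma cp_diff: assumes "completely_positive T" shows "T (A - B) = T A - T B"
proof -
  have "T (A - B) + T B = T A" using cp_add[OF assms, of "A - B" B] by simp
  then show ?thesis by (simp add: eq_diff_eq)
qed

lemma block_psd_1: "block_psd 1 X \<longleftrightarrow> (\<forall>v. 0 \<le> cinner v (X 0 0 *v v))"
proof
  assume "block_psd 1 X"
  then have h0: "\<forall>v. 0 \<le> (\<Sum>i<1. \<Sum>j<1. cinner (v i) (X i j *v v j))"
    unfolding block_psd_def .
  have h: "0 \<le> (\<Sum>i<1. \<Sum>j<1. cinner v (X i j *v v))" for v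
    using spec[OF h0, of "\<lambda>_::nat. v"] by simp
  show "\<forall>v. 0 \<le> cinner v (X 0 0 *v v)"
  proof
    fix v show "0 \<le> cinner v (X 0 0 *v v)" using h[of v] by simp
  qed
next
  assume "\<forall>v. 0 \<le> cinner v (X 0 0 *v v)"
  then show "block_psd 1 X" unfolding block_psd_def by simp
qed

lemma cp_pos: assumes "completely_positive T" "psd A" shows "psd (T A)"
proof -
  have "block_psd 1 (\<lambda>i j. A)" unfolding block_psd_1 using assms(2) by (simp add: psd_def)
  then have "block_psd 1 (\<lambda>i j. T A)" using assms(1) unfolding completely_positive_def by blast
  then show ?thesis unfolding block_psd_1 by (simp add: psd_def)
qed

lemma mat1_cscale: "cscale c (mat 1) *v x = c *s (x::complex^'d)"
  by (simp add: vec_eq_iff matrix_vector_mult_def cscale_def mat_def if_distrib if_distribR cong: if_cong)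

lemma Ran_cscale: "Ran (cscale c B) \<subseteq> Ran (B::complex^'d^'d)"
proof
  fix y assume "y \<in> Ran (cscale c B)"
  then obtain v where "y = cscale c B *v v" by (auto simp: Ran_def)
  moreover have "cscale c B *v v = B *v (c *s v)"
    by (simp add: vec_eq_iff matrix_vector_mult_def cscale_def sum_distrib_left algebra_simps)
  ultimately show "y \<in> Ran B" by (auto simp: Ran_def)
qed

lemma two_mult_le: fixes a b N :: real assumes "a^2 \<le> N" "b^2 \<le> N" shows "a * b \<le> N"
proof -
  have "0 \<le> (a - b)^2" by simp
  then have "2 * (a * b) \<le> a^2 + b^2" by (simp add: power2_eq_square algebra_simps)
  then show ?thesis using assms by linarith
qed

lemma psd_bound:
  assumes A: "psd (A::complex^'d^'d)"
  shows "\<exists>c. psd (cscale c (mat 1) - A)"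
proof -
  define C where "C = (\<Sum>i\<in>UNIV. \<Sum>j\<in>UNIV. cmod (A$i$j))"
  have "0 \<le> cinner x ((cscale (of_real C) (mat 1) - A) *v x)" for x
  proof -
    define N where "N = (\<Sum>i\<in>UNIV. (cmod (x$i))^2)"
    define q where "q = cinner x (A *v x)"
    have q0: "0 \<le> q" using A by (simp add: psd_def q_def)
    have xN: "cmod (x$i) * cmod (x$j) \<le> N" for i j
      by (rule two_mult_le) (auto simp: N_def intro!: member_le_sum)
    have "cmod q = cmod (\<Sum>i\<in>UNIV. \<Sum>j\<in>UNIV. cnj (x$i) * (A$i$j * x$j))"
      by (simp add: q_def cinner_def matrix_vector_mult_def sum_distrib_left)
    also have "\<dots> \<le> (\<Sum>i\<in>UNIV. \<Sum>j\<in>UNIV. cmod (cnj (x$i) * (A$i$j * x$j)))"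
      by (rule order.trans[OF norm_sum sum_mono]) (rule norm_sum)
    also have "\<dots> \<le> (\<Sum>i\<in>UNIV. \<Sum>j\<in>UNIV. cmod (A$i$j) * N)"
    proof (intro sum_mono)
      fix i j
      have "cmod (cnj (x$i) * (A$i$j * x$j)) = cmod (A$i$j) * (cmod (x$i) * cmod (x$j))"
        by (simp add: norm_mult)
      also have "\<dots> \<le> cmod (A$i$j) * N" by (rule mult_left_mono[OF xN]) simp
      finally show "cmod (cnj (x$i) * (A$i$j * x$j)) \<le> cmod (A$i$j) * N" .
    qed
    also have "\<dots> = C * N" by (simp add: C_def sum_distrib_right)
    finally have qC: "cmod q \<le> C * N" .
    have "Re q \<le> cmod q" by (rule complex_Re_le_cmod)
    have eq: "cinner x ((cscale (of_real C) (mat 1) - A) *v x) = of_real (C * N) - q"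
      by (simp add: matrix_vector_mult_diff_rdistrib cinner_diff_right mat1_cscale
          cinner_scale_right cinner_self N_def q_def)
    show ?thesis unfolding eq using q0 qC \<open>Re q \<le> cmod q\<close>
      by (auto simp: less_eq_complex_def)
  qed
  then show ?thesis unfolding psd_def by blast
qed



theorem proposition8p29:
  fixes T :: "complex^'d^'d \<Rightarrow> complex^'d^'d"
  assumes "completely_positive T"
    and "loewner_le (T (mat 1)) (mat 1)"
    and "finite_stab_index T"
  shows "rank (orbit_support T)
           \<le> rank (defect T) + rank (T (mat 1)) - vec.dim (Ran (defect T) \<inter> Ran (T (mat 1)))
         \<and> rank (orbit_support T) \<le> min CARD('d) (rank (defect T) + rank (T (mat 1)))"
proof -
  note cp = assms(1)
  define d where "d = defect T"
  define R where "R = T (mat 1)"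
  have d0: "psd d" using assms(2) by (simp add: d_def defect_def loewner_le_def)
  have psdk: "psd ((T ^^ k) d)" for k
    by (induct k) (simp_all add: d0 cp_pos[OF cp])
  have RanR: "Ran ((T ^^ k) d) \<subseteq> Ran R" if k1: "k \<ge> 1" for k
  proof -
    obtain m where k: "k = Suc m" using k1 by (cases k) simp_all
    define A where "A = (T ^^ m) d"
    obtain c where c: "psd (cscale c (mat 1) - A)" using psd_bound[OF psdk[of m]] A_def by blast
    have "psd (T (cscale c (mat 1) - A))" by (rule cp_pos[OF cp c])
    then have "psd (cscale c R - T A)" by (simp add: cp_diff[OF cp] cp_scale[OF cp] R_def)
    moreover have "psd (T A)" by (rule cp_pos[OF cp]) (simp add: A_def psdk)
    ultimately have "Ran (T A) \<subseteq> Ran (cscale c R)" by (rule psd_le_Ran[rotated])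
    also have "\<dots> \<subseteq> Ran R" by (rule Ran_cscale)
    finally show ?thesis by (simp add: k A_def)
  qed
  define W where "W = {x + y |x y. x \<in> Ran d \<and> y \<in> Ran R}"
  have subW: "vec.subspace W" unfolding W_def by (intro vec.subspace_sums Ran_subspace)
  define Ps where "Ps = {supp ((T ^^ k) (defect T)) | k. k < stab_index T}"
  have UW: "(\<Union>P\<in>Ps. Ran P) \<subseteq> W"
  proof
    fix y assume "y \<in> (\<Union>P\<in>Ps. Ran P)"
    then obtain k where y: "y \<in> Ran (supp ((T ^^ k) d))" by (auto simp: Ps_def d_def)
    then have y': "y \<in> Ran ((T ^^ k) d)" by (simp add: supp_def orth_proj_Ran[OF Ran_subspace])
    show "y \<in> W"
    proof (cases k)
      case 0
      then have "y = y + 0 \<and> y \<in> Ran d \<and> 0 \<in> Ran R"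
        using y' vec.subspace_0[OF Ran_subspace] by simp
      then show ?thesis unfolding W_def by blast
    next
      case (Suc m)
      then have "y \<in> Ran R" using RanR[of k] y' by auto
      then have "y = 0 + y \<and> 0 \<in> Ran d \<and> y \<in> Ran R"
        using vec.subspace_0[OF Ran_subspace] by simp
      then show ?thesis unfolding W_def by blast
    qed
  qed
  have Q: "orbit_support T = orth_proj (vec.span (\<Union>P\<in>Ps. Ran P))"
    by (simp add: orbit_support_def proj_Sup_def Ps_def)
  have rQ: "rank (orbit_support T) = vec.dim (vec.span (\<Union>P\<in>Ps. Ran P))"
  proof -
    have "Ran (orth_proj (vec.span (\<Union>P\<in>Ps. Ran P))) = vec.span (\<Union>P\<in>Ps. Ran P)"
      by (rule orth_proj_Ran[OF vec.subspace_span])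
    moreover have "rank (orbit_support T) = vec.dim (Ran (orth_proj (vec.span (\<Union>P\<in>Ps. Ran P))))"
      unfolding Q rank_eq_dim_Ran Ran_def ..
    ultimately show ?thesis by simp
  qed
  have "vec.span (\<Union>P\<in>Ps. Ran P) \<subseteq> W" by (rule vec.span_minimal[OF UW subW])
  then have rQW: "rank (orbit_support T) \<le> vec.dim W" unfolding rQ by (rule vec.dim_subset)
  have sums: "vec.dim W + vec.dim (Ran d \<inter> Ran R) = vec.dim (Ran d) + vec.dim (Ran R)"
    unfolding W_def by (rule vec.dim_sums_Int[OF Ran_subspace Ran_subspace])
  have rd: "rank d = vec.dim (Ran d)" and rR: "rank R = vec.dim (Ran R)"
    by (simp_all add: rank_eq_dim_Ran Ran_def)
  have card: "rank (orbit_support T) \<le> CARD('d)"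
    unfolding rank_eq_dim_Ran by (rule dim_subset_UNIV_cart_gen)
  show ?thesis using rQW sums rd rR card unfolding d_def[symmetric] R_def[symmetric] by linarith
qed


end
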